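(* Let $\mu$ be a subadditive capacity on $(\Omega,\mathcal{F})$ which is continuous from above, and let $\{X_n\}_{n\in\mathbb{N}}$, $X$, $Y$, $Z$ be real-valued random variables with $Y\le X_n\le Z$ for all $n$ and with $\int_\Omega Y\, d\mu$ and $\int_\Omega Z\, d\mu$ finite. If $\bar{\mu}(\{\omega:\ \lim_{n\to\infty}X_n(\omega)= X(\omega)\})=1$, then $\lim_{n\to\infty}\int_\Omega X_n\, d\mu=\int_\Omega X\, d\mu$.
   Context: A capacity is $\mu:\mathcal{F}\to[0,1]$ with $\mu(\emptyset)=0$, $\mu(\Omega)=1$, monotone; subadditive if $\mu(A\cup B)\le\mu(A)+\mu(B)$ for disjoint $A,B$; continuous from above if $\mu(A_n)\to\mu(A)$ whenever $A_n\downarrow A$. The conjugate is $\bar{\mu}(A)=1-\mu(A^c)$. Choquet integral: $\int_{\Omega}\xi\, d\mu=\int_{0}^{\infty}\mu(\{\xi\ge t\})\,dt+\int_{-\infty}^0[\mu(\{\xi\ge t\})-1]\,dt$. *)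

theory Defs
  imports "HOL-Analysis.Analysis"
begin

definition capacity :: "'a measure \<Rightarrow> ('a set \<Rightarrow> real) \<Rightarrow> bool" where
  "capacity M \<mu> \<longleftrightarrow>
     (\<forall>A\<in>sets M. 0 \<le> \<mu> A \<and> \<mu> A \<le> 1) \<and>
     \<mu> {} = 0 \<and> \<mu> (space M) = 1 \<and>
     (\<forall>A\<in>sets M. \<forall>B\<in>sets M. A \<subseteq> B \<longrightarrow> \<mu> A \<le> \<mu> B)"

definition subadditive_cap :: "'a measure \<Rightarrow> ('a set \<Rightarrow> real) \<Rightarrow> bool" where
  "subadditive_cap M \<mu> \<longleftrightarrow>
     (\<forall>A\<in>sets M. \<forall>B\<in>sets M. A \<inter> B = {} \<longrightarrow> \<mu> (A \<union> B) \<le> \<mu> A + \<mu> B)"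

definition cont_from_above :: "'a measure \<Rightarrow> ('a set \<Rightarrow> real) \<Rightarrow> bool" where
  "cont_from_above M \<mu> \<longleftrightarrow>
     (\<forall>A :: nat \<Rightarrow> 'a set. (\<forall>n. A n \<in> sets M) \<longrightarrow> decseq A \<longrightarrow>
        (\<lambda>n. \<mu> (A n)) \<longlonglongrightarrow> \<mu> (\<Inter>n. A n))"

definition conj_cap :: "'a measure \<Rightarrow> ('a set \<Rightarrow> real) \<Rightarrow> 'a set \<Rightarrow> real" where
  "conj_cap M \<mu> A = 1 - \<mu> (space M - A)"

text \<open>The two improper integrals of the monotone functions
  t |-> mu {xi >= t} are taken as Lebesgue integrals over [0,oo) and (-oo,0];
  the Choquet integral is finite iff both are integrable.\<close>
definition choquet_integrable :: "'a measure \<Rightarrow> ('a set \<Rightarrow> real) \<Rightarrow> ('a \<Rightarrow> real) \<Rightarrow> bool" where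
  "choquet_integrable M \<mu> \<xi> \<longleftrightarrow>
     set_integrable lborel {0..} (\<lambda>t. \<mu> {\<omega>\<in>space M. \<xi> \<omega> \<ge> t}) \<and>
     set_integrable lborel {..0} (\<lambda>t. \<mu> {\<omega>\<in>space M. \<xi> \<omega> \<ge> t} - 1)"

definition choquet :: "'a measure \<Rightarrow> ('a set \<Rightarrow> real) \<Rightarrow> ('a \<Rightarrow> real) \<Rightarrow> real" where
  "choquet M \<mu> \<xi> =
     (LINT t:{0..}|lborel. \<mu> {\<omega>\<in>space M. \<xi> \<omega> \<ge> t}) +
     (LINT t:{..0}|lborel. \<mu> {\<omega>\<in>space M. \<xi> \<omega> \<ge> t} - 1)"

end

theory Submission
  imports Defs
begin

lemma cap_mono: "capacity M \<mu> \<Longrightarrow> A \<in> sets M \<Longrightarrow> B \<in> sets M \<Longrightarrow> A \<subseteq> B \<Longrightarrow> \<mu> A \<le> \<mu> B"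
  unfolding capacity_def by blast

lemma cap_nonneg: "capacity M \<mu> \<Longrightarrow> A \<in> sets M \<Longrightarrow> 0 \<le> \<mu> A"
  unfolding capacity_def by blast

lemma cap_le1: "capacity M \<mu> \<Longrightarrow> A \<in> sets M \<Longrightarrow> \<mu> A \<le> 1"
  unfolding capacity_def by blast

lemma cap_sub: "subadditive_cap M \<mu> \<Longrightarrow> A \<in> sets M \<Longrightarrow> B \<in> sets M \<Longrightarrow> A \<inter> B = {} \<Longrightarrow> \<mu> (A \<union> B) \<le> \<mu> A + \<mu> B"
  unfolding subadditive_cap_def by blast

lemma null_lemma:
  assumes "capacity M \<mu>" "subadditive_cap M \<mu>" "A \<in> sets M" "N \<in> sets M" "\<mu> N = 0"
  shows "\<mu> A = \<mu> (A - N)"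
proof -
  have "\<mu> (A - N) \<le> \<mu> A" using assms by (intro cap_mono) auto
  moreover have "\<mu> A = \<mu> ((A - N) \<union> (A \<inter> N))" by (metis Diff_partition Int_lower1 Un_Diff_Int sup_commute)
  moreover have "\<dots> \<le> \<mu> (A - N) + \<mu> (A \<inter> N)" using assms by (intro cap_sub) auto
  moreover have "\<mu> (A \<inter> N) \<le> 0" using assms cap_mono[of M \<mu> "A \<inter> N" N] by auto
  ultimately show ?thesis by linarith
qed

lemma g_borel:
  fixes \<xi> :: "'a \<Rightarrow> real"
  assumes "capacity M \<mu>" "\<xi> \<in> borel_measurable M"
  shows "(\<lambda>t. \<mu> {\<omega>\<in>space M. \<xi> \<omega> \<ge> t}) \<in> borel_measurable borel"
proof -
  have "mono (\<lambda>t. - \<mu> {\<omega>\<in>space M. \<xi> \<omega> \<ge> t})"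
    unfolding mono_def using assms by (auto intro!: cap_mono)
  from borel_measurable_mono[OF this] have "(\<lambda>t. - (- \<mu> {\<omega>\<in>space M. \<xi> \<omega> \<ge> t})) \<in> borel_measurable borel"
    by measurable
  then show ?thesis by simp
qed

lemma g_ctble:
  fixes \<xi> :: "'a \<Rightarrow> real"
  assumes "capacity M \<mu>" "\<xi> \<in> borel_measurable M"
  shows "countable {s. \<not> isCont (\<lambda>t. \<mu> {\<omega>\<in>space M. \<xi> \<omega> \<ge> t}) s}"
proof -
  have "mono (\<lambda>t. - \<mu> {\<omega>\<in>space M. \<xi> \<omega> \<ge> t})"
    unfolding mono_def using assms by (auto intro!: cap_mono)
  have "isCont (\<lambda>t. - \<mu> {\<omega>\<in>space M. \<xi> \<omega> \<ge> t}) s \<longleftrightarrow> isCont (\<lambda>t. \<mu> {\<omega>\<in>space M. \<xi> \<omega> \<ge> t}) s" for s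
    using isCont_minus[of s "\<lambda>t. - \<mu> {\<omega>\<in>space M. \<xi> \<omega> \<ge> t}"] isCont_minus[of s "\<lambda>t. \<mu> {\<omega>\<in>space M. \<xi> \<omega> \<ge> t}"]
    by auto
  with mono_ctble_discont[OF \<open>mono _\<close>] show ?thesis by simp
qed

lemma S_sets:
  fixes \<xi> :: "'a \<Rightarrow> real"
  shows "\<xi> \<in> borel_measurable M \<Longrightarrow> {\<omega>\<in>space M. \<xi> \<omega> \<ge> t} \<in> sets M"
  by measurable

lemma ind_meas:
  fixes f :: "real \<Rightarrow> real"
  assumes "f \<in> borel_measurable borel" "A \<in> sets borel"
  shows "(\<lambda>t. indicator A t *\<^sub>R f t) \<in> borel_measurable lborel"
    "(\<lambda>t. indicator A t *\<^sub>R (f t - 1)) \<in> borel_measurable lborel"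
  using assms by simp_all

context
  fixes M :: "'a measure" and \<mu> :: "'a set \<Rightarrow> real"
    and X :: "nat \<Rightarrow> 'a \<Rightarrow> real" and X0 :: "'a \<Rightarrow> real"
  assumes cap: "capacity M \<mu>" and sub: "subadditive_cap M \<mu>" and cfa: "cont_from_above M \<mu>"
    and mX[measurable]: "\<And>n. X n \<in> borel_measurable M"
    and mX0[measurable]: "X0 \<in> borel_measurable M"
    and null: "\<mu> (space M - {\<omega>\<in>space M. (\<lambda>n. X n \<omega>) \<longlonglongrightarrow> X0 \<omega>}) = 0"
begin

lemma upper:
  assumes "e > 0"
  shows "eventually (\<lambda>n. \<mu> {\<omega>\<in>space M. X n \<omega> \<ge> t} < \<mu> {\<omega>\<in>space M. X0 \<omega> \<ge> t} + e) sequentially"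
proof -
  define C where "C = {\<omega>\<in>space M. (\<lambda>n. X n \<omega>) \<longlonglongrightarrow> X0 \<omega>}"
  have C[measurable]: "C \<in> sets M" unfolding C_def by measurable
  define B where "B n = {\<omega>\<in>space M. \<exists>k\<ge>n. t \<le> X k \<omega>}" for n
  have B[measurable]: "B n \<in> sets M" for n unfolding B_def by measurable
  have "decseq B" unfolding decseq_def B_def by (auto intro: order_trans)
  with cfa B have lim: "(\<lambda>n. \<mu> (B n)) \<longlonglongrightarrow> \<mu> (\<Inter>n. B n)" unfolding cont_from_above_def by blast
  have IB: "(\<Inter>n. B n) \<in> sets M" by measurable
  have "(\<Inter>n. B n) - (space M - C) \<subseteq> {\<omega>\<in>space M. X0 \<omega> \<ge> t}"
  proof
    fix \<omega> assume w: "\<omega> \<in> (\<Inter>n. B n) - (space M - C)"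
    then have sp: "\<omega> \<in> space M" and l: "(\<lambda>n. X n \<omega>) \<longlonglongrightarrow> X0 \<omega>" and fr: "\<forall>n. \<exists>k\<ge>n. t \<le> X k \<omega>"
      by (auto simp: B_def C_def)
    have "X0 \<omega> \<ge> t"
    proof (rule ccontr)
      assume "\<not> t \<le> X0 \<omega>"
      then have "eventually (\<lambda>n. X n \<omega> < t) sequentially" using l order_tendstoD(2) by force
      then obtain N where "\<forall>n\<ge>N. X n \<omega> < t" by (auto simp: eventually_sequentially)
      with fr show False by (meson linorder_not_le)
    qed
    with sp show "\<omega> \<in> {\<omega>\<in>space M. X0 \<omega> \<ge> t}" by auto
  qed
  then have "\<mu> ((\<Inter>n. B n) - (space M - C)) \<le> \<mu> {\<omega>\<in>space M. X0 \<omega> \<ge> t}"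
    using cap IB C by (intro cap_mono) auto
  moreover have "\<mu> (\<Inter>n. B n) = \<mu> ((\<Inter>n. B n) - (space M - C))"
    using null cap sub IB C by (intro null_lemma) (auto simp: C_def)
  ultimately have le: "\<mu> (\<Inter>n. B n) \<le> \<mu> {\<omega>\<in>space M. X0 \<omega> \<ge> t}" by simp
  have "eventually (\<lambda>n. \<mu> (B n) < \<mu> (\<Inter>n. B n) + e) sequentially"
    using lim assms order_tendstoD(2) by force
  then show ?thesis
  proof (rule eventually_mono)
    fix n assume "\<mu> (B n) < \<mu> (\<Inter>n. B n) + e"
    moreover have "\<mu> {\<omega>\<in>space M. X n \<omega> \<ge> t} \<le> \<mu> (B n)"
      using cap B by (intro cap_mono) (auto simp: B_def)
    ultimately show "\<mu> {\<omega>\<in>space M. X n \<omega> \<ge> t} < \<mu> {\<omega>\<in>space M. X0 \<omega> \<ge> t} + e" using le by linarith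
  qed
qed

lemma lower:
  assumes "e > 0" "s < t"
  shows "eventually (\<lambda>n. \<mu> {\<omega>\<in>space M. X n \<omega> \<ge> s} > \<mu> {\<omega>\<in>space M. X0 \<omega> \<ge> t} - e) sequentially"
proof -
  define C where "C = {\<omega>\<in>space M. (\<lambda>n. X n \<omega>) \<longlonglongrightarrow> X0 \<omega>}"
  have C[measurable]: "C \<in> sets M" unfolding C_def by measurable
  define A where "A = {\<omega>\<in>space M. X0 \<omega> \<ge> t}"
  have A[measurable]: "A \<in> sets M" unfolding A_def by measurable
  define E where "E n = {\<omega>\<in>space M. \<forall>k\<ge>n. s \<le> X k \<omega>}" for n
  have E[measurable]: "E n \<in> sets M" for n unfolding E_def by measurable
  define D where "D n = (A \<inter> C) - E n" for n
  have D[measurable]: "D n \<in> sets M" for n unfolding D_def by measurable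
  have "decseq D" unfolding decseq_def D_def E_def by auto
  with cfa D have lim: "(\<lambda>n. \<mu> (D n)) \<longlonglongrightarrow> \<mu> (\<Inter>n. D n)" unfolding cont_from_above_def by blast
  have "(\<Inter>n. D n) = {}"
  proof (rule ccontr)
    assume "(\<Inter>n. D n) \<noteq> {}"
    then obtain \<omega> where w: "\<omega> \<in> (\<Inter>n. D n)" by auto
    then have sp: "\<omega> \<in> space M" and l: "(\<lambda>n. X n \<omega>) \<longlonglongrightarrow> X0 \<omega>" and ge: "X0 \<omega> \<ge> t"
      and nE: "\<forall>n. \<omega> \<notin> E n"
      by (auto simp: D_def A_def C_def)
    have "eventually (\<lambda>n. X n \<omega> > s) sequentially" using l order_tendstoD(1) ge assms(2) by force
    then obtain N where "\<forall>n\<ge>N. X n \<omega> > s" by (auto simp: eventually_sequentially)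
    then have "\<omega> \<in> E N" using sp by (auto simp: E_def less_imp_le)
    with nE show False by blast
  qed
  with lim cap have lim0: "(\<lambda>n. \<mu> (D n)) \<longlonglongrightarrow> 0" unfolding capacity_def by simp
  have ev: "eventually (\<lambda>n. \<mu> (D n) < e) sequentially"
    using lim0 assms order_tendstoD(2) by force
  have eqA: "\<mu> A = \<mu> (A - (space M - C))"
    using null cap sub by (intro null_lemma) (auto simp: C_def)
  show ?thesis using ev
  proof (rule eventually_mono)
    fix n assume d: "\<mu> (D n) < e"
    have "A - (space M - C) \<subseteq> E n \<union> D n" using A by (auto simp: D_def A_def)
    then have "\<mu> (A - (space M - C)) \<le> \<mu> (E n \<union> D n)" using cap by (intro cap_mono) auto
    also have "\<dots> \<le> \<mu> (E n) + \<mu> (D n)" using sub by (intro cap_sub) (auto simp: D_def)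
    also have "\<mu> (E n) \<le> \<mu> {\<omega>\<in>space M. X n \<omega> \<ge> s}"
      using cap by (intro cap_mono) (auto simp: E_def)
    finally show "\<mu> {\<omega>\<in>space M. X n \<omega> \<ge> s} > \<mu> {\<omega>\<in>space M. X0 \<omega> \<ge> t} - e"
      using d eqA unfolding A_def by linarith
  qed
qed


lemma ptwise:
  assumes "isCont (\<lambda>t. \<mu> {\<omega>\<in>space M. X0 \<omega> \<ge> t}) s"
  shows "(\<lambda>n. \<mu> {\<omega>\<in>space M. X n \<omega> \<ge> s}) \<longlonglongrightarrow> \<mu> {\<omega>\<in>space M. X0 \<omega> \<ge> s}"
proof (rule order_tendstoI)
  fix a assume "a > \<mu> {\<omega>\<in>space M. X0 \<omega> \<ge> s}"
  then show "eventually (\<lambda>n. \<mu> {\<omega>\<in>space M. X n \<omega> \<ge> s} < a) sequentially"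
    using upper[of "a - \<mu> {\<omega>\<in>space M. X0 \<omega> \<ge> s}" s] by simp
next
  fix a assume a: "a < \<mu> {\<omega>\<in>space M. X0 \<omega> \<ge> s}"
  define e where "e = (\<mu> {\<omega>\<in>space M. X0 \<omega> \<ge> s} - a) / 2"
  have e: "e > 0" using a by (simp add: e_def)
  have ae: "a = \<mu> {\<omega>\<in>space M. X0 \<omega> \<ge> s} - 2 * e" unfolding e_def by (simp add: field_simps)
  from assms have "((\<lambda>t. \<mu> {\<omega>\<in>space M. X0 \<omega> \<ge> t}) \<longlongrightarrow> \<mu> {\<omega>\<in>space M. X0 \<omega> \<ge> s}) (at s)"
    by (simp add: isCont_def)
  then have "eventually (\<lambda>t. dist (\<mu> {\<omega>\<in>space M. X0 \<omega> \<ge> t}) (\<mu> {\<omega>\<in>space M. X0 \<omega> \<ge> s}) < e) (at s)"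
    using e tendstoD by blast
  then obtain d where d: "d > 0" and dd: "\<And>t. t \<noteq> s \<Longrightarrow> dist t s < d \<Longrightarrow> dist (\<mu> {\<omega>\<in>space M. X0 \<omega> \<ge> t}) (\<mu> {\<omega>\<in>space M. X0 \<omega> \<ge> s}) < e"
    unfolding eventually_at by blast
  have "dist (\<mu> {\<omega>\<in>space M. X0 \<omega> \<ge> s + d/2}) (\<mu> {\<omega>\<in>space M. X0 \<omega> \<ge> s}) < e"
    using d by (intro dd) (auto simp: dist_real_def)
  then have gt: "\<mu> {\<omega>\<in>space M. X0 \<omega> \<ge> s + d/2} > \<mu> {\<omega>\<in>space M. X0 \<omega> \<ge> s} - e"
    by (simp add: dist_real_def abs_less_iff)
  have "eventually (\<lambda>n. \<mu> {\<omega>\<in>space M. X n \<omega> \<ge> s} > \<mu> {\<omega>\<in>space M. X0 \<omega> \<ge> s + d/2} - e) sequentially"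
    using lower[of e s "s + d/2"] e d by simp
  then show "eventually (\<lambda>n. a < \<mu> {\<omega>\<in>space M. X n \<omega> \<ge> s}) sequentially"
    by (rule eventually_mono) (use gt ae in linarith)
qed

end

theorem lemma3:
  fixes M :: "'a measure" and \<mu> :: "'a set \<Rightarrow> real"
    and X :: "nat \<Rightarrow> 'a \<Rightarrow> real" and X0 Y Z :: "'a \<Rightarrow> real"
  assumes "capacity M \<mu>" and "subadditive_cap M \<mu>" and "cont_from_above M \<mu>"
    and "\<And>n. X n \<in> borel_measurable M"
    and "X0 \<in> borel_measurable M" and "Y \<in> borel_measurable M" and "Z \<in> borel_measurable M"
    and "\<And>n \<omega>. \<omega> \<in> space M \<Longrightarrow> Y \<omega> \<le> X n \<omega> \<and> X n \<omega> \<le> Z \<omega>"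
    and "choquet_integrable M \<mu> Y" and "choquet_integrable M \<mu> Z"
    and "conj_cap M \<mu> {\<omega>\<in>space M. (\<lambda>n. X n \<omega>) \<longlonglongrightarrow> X0 \<omega>} = 1"
  shows "choquet_integrable M \<mu> X0 \<and>
         (\<lambda>n. choquet M \<mu> (X n)) \<longlonglongrightarrow> choquet M \<mu> X0"
proof -
  note cap = assms(1) and sub = assms(2) and cfa = assms(3)
  have null: "\<mu> (space M - {\<omega>\<in>space M. (\<lambda>n. X n \<omega>) \<longlonglongrightarrow> X0 \<omega>}) = 0"
    using assms(11) by (simp add: conj_cap_def)
  define g where "g \<xi> t = \<mu> {\<omega>\<in>space M. \<xi> \<omega> \<ge> t}" for \<xi> :: "'a \<Rightarrow> real" and t
  have gb: "\<xi> \<in> borel_measurable M \<Longrightarrow> g \<xi> \<in> borel_measurable borel" for \<xi>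
    unfolding g_def using g_borel[OF cap] by blast
  have gm: "g (X n) \<in> borel_measurable borel" "g X0 \<in> borel_measurable borel" for n
    using gb assms(4,5) by blast+
  have g01: "0 \<le> g \<xi> t" "g \<xi> t \<le> 1" if "\<xi> \<in> borel_measurable M" for \<xi> t
  proof -
    have "{\<omega>\<in>space M. \<xi> \<omega> \<ge> t} \<in> sets M" using that by (rule S_sets)
    then show "0 \<le> g \<xi> t" "g \<xi> t \<le> 1" unfolding g_def using cap_nonneg[OF cap] cap_le1[OF cap] by auto
  qed
  have gYX: "g Y t \<le> g (X n) t" for n t
  proof -
    have s1: "{\<omega>\<in>space M. Y \<omega> \<ge> t} \<in> sets M" "{\<omega>\<in>space M. X n \<omega> \<ge> t} \<in> sets M" using assms(4,6) by (auto intro: S_sets)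
    have s2: "{\<omega>\<in>space M. Y \<omega> \<ge> t} \<subseteq> {\<omega>\<in>space M. X n \<omega> \<ge> t}"
    proof
      fix \<omega> assume "\<omega> \<in> {\<omega>\<in>space M. Y \<omega> \<ge> t}"
      then show "\<omega> \<in> {\<omega>\<in>space M. X n \<omega> \<ge> t}" using assms(8)[of \<omega> n] by simp
    qed
    show ?thesis unfolding g_def by (rule cap_mono[OF cap s1 s2])
  qed
  have gXZ: "g (X n) t \<le> g Z t" for n t
  proof -
    have s1: "{\<omega>\<in>space M. X n \<omega> \<ge> t} \<in> sets M" "{\<omega>\<in>space M. Z \<omega> \<ge> t} \<in> sets M" using assms(4,7) by (auto intro: S_sets)
    have s2: "{\<omega>\<in>space M. X n \<omega> \<ge> t} \<subseteq> {\<omega>\<in>space M. Z \<omega> \<ge> t}"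
    proof
      fix \<omega> assume "\<omega> \<in> {\<omega>\<in>space M. X n \<omega> \<ge> t}"
      then show "\<omega> \<in> {\<omega>\<in>space M. Z \<omega> \<ge> t}" using assms(8)[of \<omega> n] by simp
    qed
    show ?thesis unfolding g_def by (rule cap_mono[OF cap s1 s2])
  qed
  have AEc: "AE t in lborel. (\<lambda>n. g (X n) t) \<longlonglongrightarrow> g X0 t"
  proof (rule AE_I'[OF countable_imp_null_set_lborel[OF g_ctble[OF cap assms(5)]]])
    show "{x \<in> space lborel. \<not> (\<lambda>n. g (X n) x) \<longlonglongrightarrow> g X0 x}
      \<subseteq> {s. \<not> isCont (\<lambda>t. \<mu> {\<omega> \<in> space M. t \<le> X0 \<omega>}) s}"
    proof (intro subsetI CollectI notI)
      fix x assume "x \<in> {x \<in> space lborel. \<not> (\<lambda>n. g (X n) x) \<longlonglongrightarrow> g X0 x}"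
        and "isCont (\<lambda>t. \<mu> {\<omega> \<in> space M. t \<le> X0 \<omega>}) x"
      with ptwise[OF cap sub cfa assms(4) assms(5) null, of x] show False
        unfolding g_def by simp
    qed
  qed
  have intZ: "integrable lborel (\<lambda>t. indicator {0..} t *\<^sub>R g Z t)"
    using assms(10) unfolding choquet_integrable_def set_integrable_def g_def by (rule conjunct1)
  have "integrable lborel (\<lambda>t. indicator {..0} t *\<^sub>R (g Y t - 1))"
    using assms(9) unfolding choquet_integrable_def set_integrable_def g_def by (rule conjunct2)
  then have intY: "integrable lborel (\<lambda>t. - (indicator {..0} t *\<^sub>R (g Y t - 1)))"
    by (rule integrable_minus)
  have P1: "integrable lborel (\<lambda>t. indicator {0..} t *\<^sub>R g X0 t)"
    and P2: "(\<lambda>n. integral\<^sup>L lborel (\<lambda>t. indicator {0..} t *\<^sub>R g (X n) t))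
       \<longlonglongrightarrow> integral\<^sup>L lborel (\<lambda>t. indicator {0..} t *\<^sub>R g X0 t)"
  proof -
    have a: "(\<lambda>t. indicator {0..} t *\<^sub>R g X0 t) \<in> borel_measurable lborel" using ind_meas gm by simp
    have b: "(\<lambda>t. indicator {0..} t *\<^sub>R g (X n) t) \<in> borel_measurable lborel" for n using ind_meas gm by simp
    have c: "AE t in lborel. (\<lambda>n. indicator {0..} t *\<^sub>R g (X n) t) \<longlonglongrightarrow> indicator {0..} t *\<^sub>R g X0 t"
      using AEc by eventually_elim (simp add: tendsto_mult_left)
    have d: "AE t in lborel. norm (indicator {0..} t *\<^sub>R g (X n) t) \<le> indicator {0..} t *\<^sub>R g Z t" for n
    proof (rule AE_I2)
      fix t
      have "0 \<le> g (X n) t" "g (X n) t \<le> g Z t" using gXZ g01[OF assms(4)] by auto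
      then show "norm (indicator {0..} t *\<^sub>R g (X n) t) \<le> indicator {0..} t *\<^sub>R g Z t"
        by (simp add: indicator_def)
    qed
    show "integrable lborel (\<lambda>t. indicator {0..} t *\<^sub>R g X0 t)"
      by (rule integrable_dominated_convergence[OF a b intZ c d])
    show "(\<lambda>n. integral\<^sup>L lborel (\<lambda>t. indicator {0..} t *\<^sub>R g (X n) t))
       \<longlonglongrightarrow> integral\<^sup>L lborel (\<lambda>t. indicator {0..} t *\<^sub>R g X0 t)"
      by (rule integral_dominated_convergence[OF a b intZ c d])
  qed
  have N1: "integrable lborel (\<lambda>t. indicator {..0} t *\<^sub>R (g X0 t - 1))"
    and N2: "(\<lambda>n. integral\<^sup>L lborel (\<lambda>t. indicator {..0} t *\<^sub>R (g (X n) t - 1)))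
       \<longlonglongrightarrow> integral\<^sup>L lborel (\<lambda>t. indicator {..0} t *\<^sub>R (g X0 t - 1))"
  proof -
    have a: "(\<lambda>t. indicator {..0} t *\<^sub>R (g X0 t - 1)) \<in> borel_measurable lborel" using ind_meas gm by simp
    have b: "(\<lambda>t. indicator {..0} t *\<^sub>R (g (X n) t - 1)) \<in> borel_measurable lborel" for n using ind_meas gm by simp
    have c: "AE t in lborel. (\<lambda>n. indicator {..0} t *\<^sub>R (g (X n) t - 1)) \<longlonglongrightarrow> indicator {..0} t *\<^sub>R (g X0 t - 1)"
      using AEc by eventually_elim (simp add: tendsto_mult_left tendsto_diff)
    have d: "AE t in lborel. norm (indicator {..0} t *\<^sub>R (g (X n) t - 1)) \<le> - (indicator {..0} t *\<^sub>R (g Y t - 1))" for n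
    proof (rule AE_I2)
      fix t
      have "g (X n) t \<le> 1" "g Y t \<le> g (X n) t" using gYX g01[OF assms(4)] by auto
      then show "norm (indicator {..0} t *\<^sub>R (g (X n) t - 1)) \<le> - (indicator {..0} t *\<^sub>R (g Y t - 1))"
        by (simp add: indicator_def)
    qed
    show "integrable lborel (\<lambda>t. indicator {..0} t *\<^sub>R (g X0 t - 1))"
      by (rule integrable_dominated_convergence[OF a b intY c d])
    show "(\<lambda>n. integral\<^sup>L lborel (\<lambda>t. indicator {..0} t *\<^sub>R (g (X n) t - 1)))
       \<longlonglongrightarrow> integral\<^sup>L lborel (\<lambda>t. indicator {..0} t *\<^sub>R (g X0 t - 1))"
      by (rule integral_dominated_convergence[OF a b intY c d])
  qed
  show ?thesis
  proof
    show "choquet_integrable M \<mu> X0"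
      using P1 N1 unfolding choquet_integrable_def set_integrable_def g_def by (rule conjI)
    show "(\<lambda>n. choquet M \<mu> (X n)) \<longlonglongrightarrow> choquet M \<mu> X0"
      using tendsto_add[OF P2 N2] unfolding choquet_def set_lebesgue_integral_def g_def .
  qed
qed

end
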